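(* Let $m \equiv 1 \pmod 4$ with $m \ge 5$, $n = 3^m - 1$, $v = (3^{(m+1)/2}-1)/2$ and $\delta = (3^{(m-1)/2}+5)/2$. Then $\gcd(v,n) = 1$, and, setting $T_{(0,3,m)}(v) = \{ vi \bmod n : i \in T_{(0,3,m)}\}$, we have $\{1, 2, \ldots, \delta-1\} \subseteq T_{(0,3,m)}(v)$.
   Context: For an integer $0 \le j \le n-1$ with $3$-adic expansion $j = \sum_{t=0}^{m-1} j_t 3^t$, $j_t \in \{0,1,2\}$, let $w_3(j) = \sum_{t=0}^{m-1} j_t$. For distinct $i_1,i_2 \in \{0,1,2,3\}$, $T_{(i_1,i_2,m)} = \{1 \le j \le n-1 : w_3(j) \equiv i_1 \text{ or } i_2 \pmod 4\}$. For an integer $b$, $b \bmod n$ is the unique $b_0 \in \{0,\ldots,n-1\}$ with $b \equiv b_0 \pmod n$. *)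

theory Defs
  imports Main
begin

fun w3 :: "nat \<Rightarrow> nat" where
  "w3 j = (if j = 0 then 0 else j mod 3 + w3 (j div 3))"

declare w3.simps[simp del]

definition T_set :: "nat \<Rightarrow> nat \<Rightarrow> nat \<Rightarrow> nat set" where
  "T_set i1 i2 m = {j. 1 \<le> j \<and> j \<le> 3 ^ m - 2 \<and>
      (w3 j mod 4 = i1 \<or> w3 j mod 4 = i2)}"

end

theory Submission imports Defs begin
lemma w3_0: "w3 0 = 0" by (subst w3.simps) simp
lemma w3_1: "w3 1 = 1" by (subst w3.simps) (simp add: w3_0)
lemma w3_2: "w3 2 = 2" by (subst w3.simps) (simp add: w3_0)

lemma w3_mult3: "w3 (3*y) = w3 y"
  by (cases "y = 0") (simp add: w3_0, subst w3.simps, auto)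

lemma w3_pow: "w3 (3^k*y) = w3 y"
  by (induction k) (auto simp: w3_mult3 mult.assoc)

lemma w3_add: "x < 3^k \<Longrightarrow> w3 (x + 3^k*y) = w3 x + w3 y"
proof (induction k arbitrary: x)
  case 0 then show ?case by (simp add: w3_0)
next
  case (Suc k)
  show ?case
  proof (cases "x = 0")
    case True then show ?thesis using w3_pow[of "Suc k" y] by (simp add: w3_0)
  next
    case False
    have h1: "(x + 3^Suc k*y) mod 3 = x mod 3" using mod_mult_self2[of x 3 "3^k*y"] by (simp add: mult.assoc)
    have h2: "(x + 3^Suc k*y) div 3 = x div 3 + 3^k*y" by simp
    have h3: "x div 3 < 3^k" using Suc.prems by simp
    have "w3 (x + 3^Suc k*y) = x mod 3 + w3 (x div 3 + 3^k*y)"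
      using False h1 h2 by (subst w3.simps) simp
    also have "\<dots> = x mod 3 + w3 (x div 3) + w3 y" using Suc.IH[OF h3] by simp
    also have "x mod 3 + w3 (x div 3) = w3 x" using False by (subst (2) w3.simps) simp
    finally show ?thesis .
  qed
qed

lemma w3_par: "w3 x mod 2 = x mod 2"
proof (induction x rule: w3.induct)
  case (1 j)
  show ?case
  proof (cases "j = 0")
    case True then show ?thesis by (simp add: w3_0)
  next
    case False
    then have "w3 j = j mod 3 + w3 (j div 3)" by (subst w3.simps) simp
    moreover have "j = 3 * (j div 3) + j mod 3" by simp
    moreover have ih: "w3 (j div 3) mod 2 = (j div 3) mod 2" using 1 False by simp
    moreover have "\<And>A B r::nat. A mod 2 = B mod 2 \<Longrightarrow> (r + A) mod 2 = (3*B + r) mod 2" by presburger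
    ultimately show ?thesis by metis
  qed
qed

lemma nine_mod: "(9::nat)^k mod 8 = 1"
proof -
  have "(9::nat)^k mod 8 = (9 mod 8)^k mod 8" by (rule power_mod[symmetric])
  then show ?thesis by simp
qed

lemma modh: "a < (n::nat) \<Longrightarrow> (c*n + a) mod n = a" by simp

lemma case_even:
  assumes P: "(3::nat)^(2*k) = 8*q+1" and q1: "q \<ge> 1" and a1: "1 \<le> a" and a2: "a \<le> 4*q+2" and ev: "even a"
  shows "\<exists>i. 1 \<le> i \<and> i \<le> 192*q*q+48*q+1 \<and> (w3 i mod 4 = 0 \<or> w3 i mod 4 = 3) \<and> ((12*q+1)*i) mod (192*q*q+48*q+2) = a"
proof -
  obtain b where b: "a = 2*b" using ev by blast
  have p3: "(3::nat)^(2*k+1) = 3*(8*q+1)" using P by simp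
  define i where "i = a + 3^(2*k+1)*a"
  have iq: "i = a*(24*q+4)" unfolding i_def p3 by (simp add: algebra_simps)
  have alt: "a < 3^(2*k+1)" using a2 p3 by simp
  have w: "w3 i = 2 * w3 a" unfolding i_def using w3_add[OF alt] by simp
  have wa: "w3 a mod 2 = 0" using w3_par[of a] ev by simp
  have par4: "\<And>x y::nat. x = 2*y \<Longrightarrow> y mod 2 = 0 \<Longrightarrow> x mod 4 = 0" by presburger
  have w4: "w3 i mod 4 = 0" by (rule par4[OF w wa])
  have "i \<le> (4*q+2)*(24*q+4)" unfolding iq by (rule mult_le_mono1[OF a2])
  moreover have "(4*q+2)*(24*q+4) \<le> 192*q*q+48*q+1"
  proof -
    have "(4*q+2)*(24*q+4) = 96*(q*q) + 64*q + 8" by (simp add: algebra_simps)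
    moreover have "q \<le> q*q" using q1 by simp
    moreover have "192*q*q = 192*(q*q)" by simp
    ultimately show ?thesis using q1 by linarith
  qed
  ultimately have ile: "i \<le> 192*q*q+48*q+1" by simp
  have i1: "1 \<le> i" using iq a1 by simp
  have e: "(12*q+1) * i = (3*b) * (192*q*q+48*q+2) + a" unfolding iq b by (simp add: algebra_simps)
  have "a < 192*q*q+48*q+2" using a2 q1 by simp
  then have mf: "((12*q+1) * i) mod (192*q*q+48*q+2) = a" unfolding e by (rule modh)
  show ?thesis by (rule exI[of _ i]) (simp only: i1 ile w4 mf simp_thms)
qed

lemma case_edge:
  assumes P: "(3::nat)^(2*k) = 8*q+1" and q1: "q \<ge> 1" and a2: "a = 4*q+1"
  shows "\<exists>i. 1 \<le> i \<and> i \<le> 192*q*q+48*q+1 \<and> (w3 i mod 4 = 0 \<or> w3 i mod 4 = 3) \<and> ((12*q+1)*i) mod (192*q*q+48*q+2) = a"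
proof -
  define i :: nat where "i = 1 + 3^(2*k)*2"
  have iq: "i = 16*q+3" unfolding i_def P by simp
  have "(1::nat) < 3^(2*k)" using P q1 by simp
  then have w: "w3 i = w3 1 + w3 2" unfolding i_def by (rule w3_add)
  then have w4: "w3 i mod 4 = 3" unfolding w3_1 w3_2 by simp
  have e: "(12*q+1) * i = 1 * (192*q*q+48*q+2) + a" unfolding iq a2 by (simp add: algebra_simps)
  have "a < 192*q*q+48*q+2" using a2 q1 by simp
  then have "((12*q+1) * i) mod (192*q*q+48*q+2) = a" unfolding e by (rule modh)
  moreover have "1 \<le> i" "i \<le> 192*q*q+48*q+1" using iq q1 by simp_all
  ultimately show ?thesis using w4 by blast
qed

lemma case_odd:
  assumes P: "(3::nat)^(2*k) = 8*q+1" and q1: "q \<ge> 1" and a1: "1 \<le> a" and a3: "a \<le> 4*q - 1" and od: "odd a"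
  shows "\<exists>i. 1 \<le> i \<and> i \<le> 192*q*q+48*q+1 \<and> (w3 i mod 4 = 0 \<or> w3 i mod 4 = 3) \<and> ((12*q+1)*i) mod (192*q*q+48*q+2) = a"
proof -
  have p3: "(3::nat)^(2*k+1) = 3*(8*q+1)" using P by simp
  define s where "s = a + 4*q"
  have sodd: "odd s" using od unfolding s_def by simp
  obtain t where t: "s = 2*t+1" using sodd by (metis oddE)
  have sP: "s + 3^(2*k) < 3^(2*k+1)" using a3 q1 unfolding s_def p3 P by simp
  have sP2: "s < 3^(2*k)" using a3 q1 unfolding s_def P by simp
  define i where "i = (s + 3^(2*k)) + 3^(2*k+1)*s"
  have iq: "i = s*(24*q+4) + 8*q+1" unfolding i_def p3 P by (simp add: algebra_simps)
  have A: "w3 i = w3 (s + 3^(2*k)) + w3 s" unfolding i_def by (rule w3_add[OF sP])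
  have B: "w3 (s + 3^(2*k)*1) = w3 s + w3 1" by (rule w3_add[OF sP2])
  have w: "w3 i = 2 * w3 s + 1" using A B[unfolded w3_1 mult_1_right] by simp
  have ws: "w3 s mod 2 = 1" using w3_par[of s] sodd by (simp add: odd_iff_mod_2_eq_one)
  have par4: "\<And>x y::nat. x = 2*y+1 \<Longrightarrow> y mod 2 = 1 \<Longrightarrow> x mod 4 = 3" by presburger
  have w4: "w3 i mod 4 = 3" by (rule par4[OF w ws])
  have s1: "s + 1 \<le> 8*q" using a3 q1 unfolding s_def by simp
  have "(s+1)*(24*q+4) \<le> (8*q)*(24*q+4)" by (rule mult_le_mono1[OF s1])
  moreover have "(s+1)*(24*q+4) = 24*(s*q)+4*s+24*q+4" by (simp add: algebra_simps)
  moreover have "(8*q)*(24*q+4) = 192*(q*q)+32*q" by (simp add: algebra_simps)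
  moreover have "i = 24*(s*q) + 4*s + 8*q+1" unfolding iq by (simp add: algebra_simps)
  moreover have "192*q*q = 192*(q*q)" by simp
  ultimately have ile: "i \<le> 192*q*q+48*q+1" by linarith
  have i1: "1 \<le> i" using iq by simp
  have "(12*q+1) * i + 4*q = (3*t+2)*(192*q*q+48*q+2) + s" unfolding iq t by (simp add: algebra_simps)
  then have e: "(12*q+1) * i = (3*t+2)*(192*q*q+48*q+2) + a" unfolding s_def by simp
  have "a < 192*q*q+48*q+2" using a3 q1 by simp
  then have mf: "((12*q+1) * i) mod (192*q*q+48*q+2) = a" unfolding e by (rule modh)
  show ?thesis by (rule exI[of _ i]) (simp only: i1 ile w4 mf simp_thms)
qed

lemma core:
  assumes P: "(3::nat)^(2*k) = 8*q+1" and q1: "q \<ge> 1" and a1: "1 \<le> a" and a2: "a \<le> 4*q+2"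
  shows "\<exists>i. 1 \<le> i \<and> i \<le> 192*q*q+48*q+1 \<and> (w3 i mod 4 = 0 \<or> w3 i mod 4 = 3) \<and> ((12*q+1)*i) mod (192*q*q+48*q+2) = a"
proof (cases "even a")
  case True then show ?thesis using case_even[OF P q1 a1 a2] by blast
next
  case False
  show ?thesis
  proof (cases "a = 4*q+1")
    case True then show ?thesis using case_edge[OF P q1] by blast
  next
    case ne: False
    have a3: "a \<le> 4*q - 1" using a2 ne False by presburger
    show ?thesis using case_odd[OF P q1 a1 a3 False] .
  qed
qed

theorem lemma1:
  fixes m :: nat
  assumes "m mod 4 = 1" and "m \<ge> 5"
  defines "n \<equiv> 3 ^ m - 1"
      and "v \<equiv> (3 ^ ((m + 1) div 2) - 1) div 2"
      and "\<delta> \<equiv> (3 ^ ((m - 1) div 2) + 5) div 2"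
  shows "gcd v n = 1 \<and> {1..<\<delta>} \<subseteq> (\<lambda>i. (v * i) mod n) ` T_set 0 3 m"
proof -
  obtain k where mk: "m = 4*k+1" using assms(1) by (metis div_mod_decomp mult.commute)
  have k1: "k \<ge> 1" using assms(2) mk by simp
  define P :: nat where "P = 3^(2*k)"
  have P9: "P = 9^k" unfolding P_def by (simp add: power_mult)
  obtain q where q: "P = 8*q+1" using nine_mod[of k] P9 by (metis div_mod_decomp mult.commute)
  have "P \<ge> 9" using k1 P9 power_increasing[of 1 k "9::nat"] by simp
  then have q1: "q \<ge> 1" using q by simp
  have h1: "(m + 1) div 2 = 2*k+1" using mk by simp
  have h2: "(m - 1) div 2 = 2*k" using mk by simp
  have p3: "(3::nat)^(2*k+1) = 3*P" unfolding P_def by simp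
  have pm: "(3::nat)^m = 3*P*P" unfolding P_def mk
    by (simp add: power_add power_mult_distrib[symmetric] flip: power_mult) (simp add: power_mult power2_eq_square)
  have pm': "(3::nat)^m = 192*q*q+48*q+3" using pm q by (simp add: algebra_simps)
  have nq: "n = 192*q*q+48*q+2" unfolding n_def pm' by simp
  have vq: "v = 12*q+1" unfolding v_def h1 p3 q by simp
  have dq: "\<delta> = 4*q+3" unfolding \<delta>_def h2 P_def[symmetric] q by simp
  have g: "gcd v n = 1"
  proof -
    have e: "2 * (v * (24*q+4)) = 3*n+2" unfolding vq nq by (simp add: algebra_simps)
    let ?d = "gcd v n"
    have "?d dvd 3*n+2" by (metis e dvd_mult gcd_dvd1 dvd_mult2)
    moreover have "?d dvd 3*n" by simp
    ultimately have d2: "?d dvd 2" by (metis dvd_add_right_iff add.commute)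
    have od: "odd ?d" using vq by (metis dvd_trans gcd_dvd1 even_mult_iff odd_add odd_one even_numeral dvd_add_right_iff)
    define d where "d = ?d"
    have "d \<le> 2" using d2 unfolding d_def by (rule dvd_imp_le) simp
    moreover have "odd d" using od unfolding d_def .
    ultimately have "d = 1" by presburger
    then show ?thesis unfolding d_def .
  qed
  have P8: "(3::nat)^(2*k) = 8*q+1" using q unfolding P_def .
  have "a \<in> (\<lambda>i. (v * i) mod n) ` T_set 0 3 m" if a: "a \<in> {1..<\<delta>}" for a
  proof -
    have a1: "1 \<le> a" and a2: "a \<le> 4*q+2" using a dq by auto
    from core[OF P8 q1 a1 a2] obtain i where i0: "1 \<le> i \<and> i \<le> 192*q*q+48*q+1 \<and> (w3 i mod 4 = 0 \<or> w3 i mod 4 = 3) \<and> ((12*q+1)*i) mod (192*q*q+48*q+2) = a" ..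
    note i = conjunct1[OF i0] conjunct1[OF conjunct2[OF i0]] conjunct1[OF conjunct2[OF conjunct2[OF i0]]] conjunct2[OF conjunct2[OF conjunct2[OF i0]]]
    have "i \<in> T_set 0 3 m" unfolding T_set_def pm' using i(1-3) by simp
    moreover have "(v*i) mod n = a" unfolding vq nq using i(4) .
    ultimately show ?thesis by force
  qed
  then show ?thesis using g by blast
qed

end
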